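(* Let $n\ge2$, let $c=(c_{i,j})$ be an $n\times(n+1)$ matrix with entries in $\{0,1\}$, $\sigma_1,\ldots,\sigma_n>0$, $\gamma_1,\ldots,\gamma_{n+1}>0$. Let $\mathbf{X}=(X_1,\ldots,X_n)'$ have decumulative distribution function $\mathbf{P}[X_1>x_1,\ldots,X_n>x_n]=\prod_{j=1}^{n+1}(1+\sum_{i=1}^nc_{i,j}x_i/\sigma_i)^{-\gamma_j}$ for $(x_1,\ldots,x_n)'\in(0,\infty)^n$. For $1\le k\ne l\le n$ let $\gamma_{c,(k,l)}=\gamma_{c,(l,k)}=\sum_jc_{k,j}c_{l,j}\gamma_j$ (assumed $>0$), $\gamma_{c,k}=\sum_jc_{k,j}(1-c_{l,j})\gamma_j$ and $m(x_l)=\frac{\sigma_k}{\gamma_{c,(k,l)}}(1+x_l/\sigma_l)$. Then for $x_k,x_l>0$, \[ \mathbf{P}[X_k>x_k\mid X_l>x_l]=\left(1+\frac{x_k}{\sigma_k}\right)^{-\gamma_{c,k}}\left(1+\frac{x_k}{\gamma_{c,(k,l)}m(x_l)}\right)^{-\gamma_{c,(l,k)}}. \] *)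

theory Defs
  imports "HOL-Probability.Probability"
begin

end

theory Submission
  imports Defs
begin


lemma set_all_gt:
  assumes "\<And>i. i \<in> I \<Longrightarrow> X i \<in> borel_measurable M" "finite I"
  shows "{\<omega>\<in>space M. \<forall>i\<in>I. a i < (X i \<omega> :: real)} \<in> sets M"
proof (rule sets.sets_Collect_finite_All[OF _ assms(2)])
  fix i assume "i \<in> I"
  then have [measurable]: "X i \<in> borel_measurable M" by (rule assms)
  show "{\<omega>\<in>space M. a i < X i \<omega>} \<in> sets M" by measurable
qed

lemma surv_nonneg:
  fixes M :: "'a measure" and n :: nat
    and c :: "nat \<Rightarrow> nat \<Rightarrow> real"
    and \<sigma> :: "nat \<Rightarrow> real" and \<gamma> :: "nat \<Rightarrow> real"
    and X :: "nat \<Rightarrow> 'a \<Rightarrow> real" and x :: "nat \<Rightarrow> real"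
  assumes P: "prob_space M"
    and c01: "\<And>i j. i \<in> {1..n} \<Longrightarrow> j \<in> {1..n+1} \<Longrightarrow> c i j \<in> {0, 1}"
    and sig: "\<And>i. i \<in> {1..n} \<Longrightarrow> \<sigma> i > 0"
    and rv: "\<And>i. i \<in> {1..n} \<Longrightarrow> X i \<in> borel_measurable M"
    and surv: "\<And>x :: nat \<Rightarrow> real. (\<forall>i\<in>{1..n}. x i > 0) \<Longrightarrow>
        \<P>(\<omega> in M. \<forall>i\<in>{1..n}. X i \<omega> > x i)
          = (\<Prod>j\<in>{1..n+1}. (1 + (\<Sum>i\<in>{1..n}. c i j * x i / \<sigma> i)) powr (- \<gamma> j))"
    and x0: "\<And>i. i \<in> {1..n} \<Longrightarrow> x i \<ge> 0"
  shows "\<P>(\<omega> in M. \<forall>i\<in>{1..n}. X i \<omega> > x i)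
          = (\<Prod>j\<in>{1..n+1}. (1 + (\<Sum>i\<in>{1..n}. c i j * x i / \<sigma> i)) powr (- \<gamma> j))"
proof -
  interpret prob_space M by (rule P)
  define A where "A m = {\<omega>\<in>space M. \<forall>i\<in>{1..n}. X i \<omega> > x i + inverse (real (Suc m))}" for m
  have As: "range A \<subseteq> sets M"
    unfolding A_def using set_all_gt[of "{1..n}" X M, OF rv] by auto
  have inc: "incseq A"
  proof (rule incseq_SucI)
    fix m
    have h: "inverse (real (Suc (Suc m))) \<le> inverse (real (Suc m))"
      by (simp add: field_simps)
    show "A m \<subseteq> A (Suc m)" unfolding A_def
    proof (rule subsetI)
      fix \<omega> assume "\<omega> \<in> {\<omega> \<in> space M. \<forall>i\<in>{1..n}. x i + inverse (real (Suc m)) < X i \<omega>}"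
      then have w: "\<omega> \<in> space M" "\<And>i. i\<in>{1..n} \<Longrightarrow> x i + inverse (real (Suc m)) < X i \<omega>" by auto
      have "\<And>i. i\<in>{1..n} \<Longrightarrow> x i + inverse (real (Suc (Suc m))) < X i \<omega>"
        by (rule le_less_trans[OF add_left_mono[OF h]]) (rule w(2))
      with w(1) show "\<omega> \<in> {\<omega> \<in> space M. \<forall>i\<in>{1..n}. x i + inverse (real (Suc (Suc m))) < X i \<omega>}" by blast
    qed
  qed
  have ip: "\<And>m. inverse (real (Suc m)) > 0" by simp
  have U: "(\<Union>m. A m) = {\<omega>\<in>space M. \<forall>i\<in>{1..n}. X i \<omega> > x i}"
  proof
    show "(\<Union>m. A m) \<subseteq> {\<omega>\<in>space M. \<forall>i\<in>{1..n}. X i \<omega> > x i}"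
    proof (rule subsetI)
      fix \<omega> assume "\<omega> \<in> (\<Union>m. A m)"
      then obtain m where "\<omega> \<in> A m" by blast
      then have w: "\<omega> \<in> space M" "\<And>i. i\<in>{1..n} \<Longrightarrow> x i + inverse (real (Suc m)) < X i \<omega>"
        unfolding A_def by auto
      have "x i < X i \<omega>" if i: "i \<in> {1..n}" for i
        by (rule less_trans[OF _ w(2)[OF i]]) (use ip[of m] in simp)
      with w(1) show "\<omega> \<in> {\<omega>\<in>space M. \<forall>i\<in>{1..n}. X i \<omega> > x i}" by blast
    qed
  next
    show "{\<omega>\<in>space M. \<forall>i\<in>{1..n}. X i \<omega> > x i} \<subseteq> (\<Union>m. A m)"
    proof safe
      fix \<omega> assume w: "\<omega> \<in> space M" "\<forall>i\<in>{1..n}. X i \<omega> > x i"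
      have "\<forall>i\<in>{1..n}. eventually (\<lambda>m. inverse (real (Suc m)) < X i \<omega> - x i) sequentially"
      proof
        fix i assume i: "i \<in> {1..n}"
        show "eventually (\<lambda>m. inverse (real (Suc m)) < X i \<omega> - x i) sequentially"
          by (rule order_tendstoD(2)[OF LIMSEQ_inverse_real_of_nat]) (use w i in auto)
      qed
      then have "eventually (\<lambda>m. \<forall>i\<in>{1..n}. inverse (real (Suc m)) < X i \<omega> - x i) sequentially"
        by (simp add: eventually_ball_finite)
      then obtain N where "\<forall>i\<in>{1..n}. inverse (real (Suc N)) < X i \<omega> - x i"
        by (auto simp: eventually_sequentially)
      then have "\<omega> \<in> A N" unfolding A_def using w by auto
      then show "\<omega> \<in> (\<Union>m. A m)" by blast
    qed
  qed
  have L1: "(\<lambda>m. measure M (A m)) \<longlonglongrightarrow> measure M {\<omega>\<in>space M. \<forall>i\<in>{1..n}. X i \<omega> > x i}"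
    using finite_Lim_measure_incseq[OF As inc] U by simp
  have eqA: "measure M (A m) = (\<Prod>j\<in>{1..n+1}. (1 + (\<Sum>i\<in>{1..n}. c i j * (x i + inverse (real (Suc m))) / \<sigma> i)) powr (- \<gamma> j))" for m
  proof -
    have "\<forall>i\<in>{1..n}. x i + inverse (real (Suc m)) > 0"
      using x0 ip[of m] by (simp del: of_nat_Suc add: add_nonneg_pos)
    from surv[OF this] show ?thesis unfolding A_def by simp
  qed
  have base: "1 + (\<Sum>i\<in>{1..n}. c i j * x i / \<sigma> i) \<noteq> 0" if "j \<in> {1..n+1}" for j
  proof -
    have "(\<Sum>i\<in>{1..n}. c i j * x i / \<sigma> i) \<ge> 0"
    proof (rule sum_nonneg)
      fix i assume i: "i \<in> {1..n}"
      have "c i j \<ge> 0" using c01[OF i that] by auto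
      then show "c i j * x i / \<sigma> i \<ge> 0" using x0[OF i] sig[OF i] by simp
    qed
    then show ?thesis by linarith
  qed
  have L2: "(\<lambda>m. (\<Prod>j\<in>{1..n+1}. (1 + (\<Sum>i\<in>{1..n}. c i j * (x i + inverse (real (Suc m))) / \<sigma> i)) powr (- \<gamma> j)))
       \<longlonglongrightarrow> (\<Prod>j\<in>{1..n+1}. (1 + (\<Sum>i\<in>{1..n}. c i j * x i / \<sigma> i)) powr (- \<gamma> j))"
  proof -
    have li: "\<And>i. (\<lambda>m. x i + inverse (real (Suc m))) \<longlonglongrightarrow> x i"
      using tendsto_add[OF tendsto_const LIMSEQ_inverse_real_of_nat] by simp
    have sz: "\<And>i. i \<in> {1..n} \<Longrightarrow> \<sigma> i \<noteq> 0" using sig by force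
    show ?thesis using base li by (auto intro!: tendsto_intros simp: sz)
  qed
  have "measure M {\<omega>\<in>space M. \<forall>i\<in>{1..n}. X i \<omega> > x i}
       = (\<Prod>j\<in>{1..n+1}. (1 + (\<Sum>i\<in>{1..n}. c i j * x i / \<sigma> i)) powr (- \<gamma> j))"
    using LIMSEQ_unique[OF L1] L2 eqA by simp
  then show ?thesis by simp
qed

theorem proposition4p4:
  fixes M :: "'a measure" and n :: nat
    and c :: "nat \<Rightarrow> nat \<Rightarrow> real"
    and \<sigma> :: "nat \<Rightarrow> real" and \<gamma> :: "nat \<Rightarrow> real"
    and X :: "nat \<Rightarrow> 'a \<Rightarrow> real"
    and k l :: nat and xk xl :: real
  assumes "prob_space M"
    and "n \<ge> 2"
    and c01: "\<And>i j. i \<in> {1..n} \<Longrightarrow> j \<in> {1..n+1} \<Longrightarrow> c i j \<in> {0, 1}"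
    and "\<And>i. i \<in> {1..n} \<Longrightarrow> \<sigma> i > 0"
    and "\<And>j. j \<in> {1..n+1} \<Longrightarrow> \<gamma> j > 0"
    and rv: "\<And>i. i \<in> {1..n} \<Longrightarrow> X i \<in> borel_measurable M"
    and surv: "\<And>x :: nat \<Rightarrow> real. (\<forall>i\<in>{1..n}. x i > 0) \<Longrightarrow>
        \<P>(\<omega> in M. \<forall>i\<in>{1..n}. X i \<omega> > x i)
          = (\<Prod>j\<in>{1..n+1}. (1 + (\<Sum>i\<in>{1..n}. c i j * x i / \<sigma> i)) powr (- \<gamma> j))"
    and "k \<in> {1..n}" and "l \<in> {1..n}" and "k \<noteq> l"
    and gkl_pos: "(\<Sum>j\<in>{1..n+1}. c k j * c l j * \<gamma> j) > 0"
    and "xk > 0" and "xl > 0"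
  shows "(let \<gamma>kl = (\<Sum>j\<in>{1..n+1}. c k j * c l j * \<gamma> j);
              \<gamma>lk = (\<Sum>j\<in>{1..n+1}. c l j * c k j * \<gamma> j);
              \<gamma>k = (\<Sum>j\<in>{1..n+1}. c k j * (1 - c l j) * \<gamma> j);
              m = (\<lambda>t. \<sigma> k / \<gamma>kl * (1 + t / \<sigma> l))
          in \<P>(\<omega> in M. X k \<omega> > xk \<bar> X l \<omega> > xl)
             = (1 + xk / \<sigma> k) powr (- \<gamma>k)
               * (1 + xk / (\<gamma>kl * m xl)) powr (- \<gamma>lk))"
  proof -
  note P = assms(1)
  interpret prob_space M by (rule P)
  have kn: "k \<in> {1..n}" and ln: "l \<in> {1..n}" by fact+
  have [measurable]: "X k \<in> borel_measurable M" "X l \<in> borel_measurable M" using rv kn ln by auto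
  note SN = surv_nonneg[OF P c01 assms(4) rv surv]
  define F where "F x = (\<Prod>j\<in>{1..n+1}. (1 + (\<Sum>i\<in>{1..n}. c i j * x i / \<sigma> i)) powr (- \<gamma> j))" for x
  define Z where "Z = {\<omega>\<in>space M. \<forall>i\<in>{1..n}. X i \<omega> > 0}"
  have "prob Z = 1"
    using SN[of "\<lambda>_. 0"] unfolding Z_def by simp
  then have AEZ: "AE \<omega> in M. \<omega> \<in> Z" by (rule AE_prob_1)
  define xkl where "xkl i = (if i = k then xk else if i = l then xl else 0)" for i
  define xl' where "xl' i = (if i = l then xl else 0)" for i
  have J: "\<P>(\<omega> in M. X k \<omega> > xk \<and> X l \<omega> > xl) = F xkl"
  proof -
    have "\<P>(\<omega> in M. X k \<omega> > xk \<and> X l \<omega> > xl) = \<P>(\<omega> in M. \<forall>i\<in>{1..n}. X i \<omega> > xkl i)"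
    proof (rule finite_measure_eq_AE)
      show "AE \<omega> in M. (\<omega> \<in> {\<omega> \<in> space M. X k \<omega> > xk \<and> X l \<omega> > xl}) =
            (\<omega> \<in> {\<omega> \<in> space M. \<forall>i\<in>{1..n}. X i \<omega> > xkl i})"
        using AEZ
      proof eventually_elim
        case (elim \<omega>)
        then show ?case using kn ln \<open>k \<noteq> l\<close> unfolding Z_def xkl_def by auto
      qed
    qed (use set_all_gt[of "{1..n}" X M, OF rv] in auto)
    also have "\<dots> = F xkl" unfolding F_def
      by (rule SN) (use \<open>xk > 0\<close> \<open>xl > 0\<close> in \<open>auto simp: xkl_def\<close>)
    finally show ?thesis .
  qed
  have Lm: "\<P>(\<omega> in M. X l \<omega> > xl) = F xl'"
  proof -
    have "\<P>(\<omega> in M. X l \<omega> > xl) = \<P>(\<omega> in M. \<forall>i\<in>{1..n}. X i \<omega> > xl' i)"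
    proof (rule finite_measure_eq_AE)
      show "AE \<omega> in M. (\<omega> \<in> {\<omega> \<in> space M. X l \<omega> > xl}) =
            (\<omega> \<in> {\<omega> \<in> space M. \<forall>i\<in>{1..n}. X i \<omega> > xl' i})"
        using AEZ
      proof eventually_elim
        case (elim \<omega>)
        then show ?case using ln unfolding Z_def xl'_def by auto
      qed
    qed (use set_all_gt[of "{1..n}" X M, OF rv] in auto)
    also have "\<dots> = F xl'" unfolding F_def
      by (rule SN) (use \<open>xl > 0\<close> in \<open>auto simp: xl'_def\<close>)
    finally show ?thesis .
  qed
  have sk: "\<sigma> k > 0" and sl: "\<sigma> l > 0" using assms(4) kn ln by auto
  define a where "a = 1 + xk / \<sigma> k"
  define b where "b = 1 + xk / (\<sigma> k * (1 + xl / \<sigma> l))"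
  have apos: "a > 0" unfolding a_def using sk \<open>xk > 0\<close> by (simp add: add_pos_pos)
  have lpos: "1 + xl / \<sigma> l > 0" using sl \<open>xl > 0\<close> by (simp add: add_pos_pos)
  have bpos: "b > 0" unfolding b_def using sk lpos \<open>xk > 0\<close> by (simp add: add_pos_pos)
  have sumkl: "(\<Sum>i\<in>{1..n}. c i j * xkl i / \<sigma> i) = c k j * xk / \<sigma> k + c l j * xl / \<sigma> l" for j
  proof -
    have "(\<Sum>i\<in>{1..n}. c i j * xkl i / \<sigma> i) = (\<Sum>i\<in>{1..n}. (if i = k then c k j * xk / \<sigma> k else 0) + (if i = l then c l j * xl / \<sigma> l else 0))"
      by (rule sum.cong) (use \<open>k \<noteq> l\<close> in \<open>auto simp: xkl_def\<close>)
    then show ?thesis using kn ln by (simp add: sum.distrib)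
  qed
  have suml: "(\<Sum>i\<in>{1..n}. c i j * xl' i / \<sigma> i) = c l j * xl / \<sigma> l" for j
  proof -
    have "(\<Sum>i\<in>{1..n}. c i j * xl' i / \<sigma> i) = (\<Sum>i\<in>{1..n}. (if i = l then c l j * xl / \<sigma> l else 0))"
      by (rule sum.cong) (auto simp: xl'_def)
    then show ?thesis using ln by simp
  qed
  have ratio: "(1 + (c k j * xk / \<sigma> k + c l j * xl / \<sigma> l)) powr (- \<gamma> j) / (1 + c l j * xl / \<sigma> l) powr (- \<gamma> j)
      = a powr (- (c k j * (1 - c l j) * \<gamma> j)) * b powr (- (c l j * c k j * \<gamma> j))"
    if j: "j \<in> {1..n+1}" for j
  proof -
    have ck: "c k j = 0 \<or> c k j = 1" and cl: "c l j = 0 \<or> c l j = 1" using c01 kn ln j by auto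
    have q: "(1 + (xk / \<sigma> k + xl / \<sigma> l)) / (1 + xl / \<sigma> l) = b"
    proof -
      have e: "1 + (xk / \<sigma> k + xl / \<sigma> l) = (1 + xl / \<sigma> l) + xk / \<sigma> k" by linarith
      have gen: "\<And>d e::real. d \<noteq> 0 \<Longrightarrow> (d + e) / d = 1 + e / d" by (simp add: field_simps)
      have "(1 + (xk / \<sigma> k + xl / \<sigma> l)) / (1 + xl / \<sigma> l) = ((1 + xl / \<sigma> l) + xk / \<sigma> k) / (1 + xl / \<sigma> l)"
        by (subst e) (rule refl)
      also have "\<dots> = 1 + (xk / \<sigma> k) / (1 + xl / \<sigma> l)"
        by (rule gen) (use lpos in simp)
      finally have "(1 + (xk / \<sigma> k + xl / \<sigma> l)) / (1 + xl / \<sigma> l) = 1 + (xk / \<sigma> k) / (1 + xl / \<sigma> l)" .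
      then show ?thesis unfolding b_def by simp
    qed
    have p1: "1 + (xk / \<sigma> k + xl / \<sigma> l) \<ge> 0" using sk sl \<open>xk > 0\<close> \<open>xl > 0\<close>
      by (intro add_nonneg_nonneg divide_nonneg_pos) auto
    have p2: "(1 + (xk / \<sigma> k + xl / \<sigma> l)) powr (- \<gamma> j) / (1 + xl / \<sigma> l) powr (- \<gamma> j) = b powr (- \<gamma> j)"
      using powr_divide[of "1 + (xk / \<sigma> k + xl / \<sigma> l)" "1 + xl / \<sigma> l" "- \<gamma> j"] q by simp
    from ck cl show ?thesis
      using apos bpos lpos p2 by (auto simp: a_def)
  qed
  have "F xkl / F xl' = (\<Prod>j\<in>{1..n+1}. a powr (- (c k j * (1 - c l j) * \<gamma> j)) * b powr (- (c l j * c k j * \<gamma> j)))"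
    unfolding F_def sumkl suml prod_dividef[symmetric]
    by (rule prod.cong) (simp_all add: ratio)
  also have "\<dots> = (\<Prod>j\<in>{1..n+1}. a powr (- (c k j * (1 - c l j) * \<gamma> j))) * (\<Prod>j\<in>{1..n+1}. b powr (- (c l j * c k j * \<gamma> j)))"
    by (rule prod.distrib)
  also have "\<dots> = a powr (\<Sum>j\<in>{1..n+1}. - (c k j * (1 - c l j) * \<gamma> j)) * b powr (\<Sum>j\<in>{1..n+1}. - (c l j * c k j * \<gamma> j))"
  proof -
    have pa: "\<And>f. (\<Prod>j\<in>{1..n+1}. a powr f j) = a powr (sum f {1..n+1})" by (rule powr_sum[symmetric]) (use apos in simp)
    have pb: "\<And>f. (\<Prod>j\<in>{1..n+1}. b powr f j) = b powr (sum f {1..n+1})" by (rule powr_sum[symmetric]) (use bpos in simp)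
    show ?thesis by (simp only: pa pb)
  qed
  also have "\<dots> = a powr (- (\<Sum>j\<in>{1..n+1}. c k j * (1 - c l j) * \<gamma> j)) * b powr (- (\<Sum>j\<in>{1..n+1}. c l j * c k j * \<gamma> j))"
    by (simp only: sum_negf)
  finally have R: "F xkl / F xl' = \<dots>" .
  have gkl: "(\<Sum>j\<in>{1..n+1}. c k j * c l j * \<gamma> j) \<noteq> 0" using gkl_pos by simp
  have bb: "b = 1 + xk / ((\<Sum>j\<in>{1..n+1}. c k j * c l j * \<gamma> j) * (\<sigma> k / (\<Sum>j\<in>{1..n+1}. c k j * c l j * \<gamma> j) * (1 + xl / \<sigma> l)))"
    unfolding b_def using gkl by simp
  show ?thesis
    unfolding Let_def cond_prob_def J Lm R using a_def bb by simp
qed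

end
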